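(* Let $\mathbb{A}$ be the Fraïssé limit of the class $\mathscr{C}$ of all totally ordered structures from a free amalgamation class $\mathscr{C}_0$ of finite irreflexive $\sigma_0$-structures (with $\sigma_0$ finite, unary and binary relations only). Let $X, Y, \{z\}\subseteq\mathbb{A}$ be pairwise disjoint finite sets. Then there is $\tau\in\operatorname{Aut}(\mathbb{A})$ such that (1) $\tau(x)=x$ for all $x\in X$; (2) $\tau(z)$ is unrelated to every $y\in Y$ and to $z$; (3) $\tau(z)>z$.
   Context: Two elements $u,v$ are related if $u=v$ or $R(u,v)$ or $R(v,u)$ holds for some binary $R\in\sigma_0$. A free amalgamation class is a class $\operatorname{Forb}(\mathscr{F})$ of all finite $\sigma_0$-structures embedding no member of $\mathscr{F}$, where in each member of $\mathscr{F}$ every two elements are related. Irreflexive: each binary relation holds only between distinct elements. $\mathscr{C}$ consists of all $(\sigma_0\uplus\{<\})$-structures obtained from members of $\mathscr{C}_0$ by interpreting $<$ as any total order; $\mathbb{A}$ is its Fraïssé limit (the countable homogeneous structure with age $\mathscr{C}$). *)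

theory Defs
  imports Main "HOL-Library.Countable_Set"
begin

text \<open>A (relational) sigma0-structure: unary symbols of type 'u, binary symbols of type 'b.
  The actual signature is given by finite symbol sets SU, SB. An ordered structure
  additionally carries a binary relation lt interpreting the order symbol.\<close>

record ('u, 'b, 'a) struc =
  dom :: "'a set"
  un  :: "'u \<Rightarrow> 'a \<Rightarrow> bool"
  bin :: "'b \<Rightarrow> 'a \<Rightarrow> 'a \<Rightarrow> bool"

definition embeds0 ::
  "'u set \<Rightarrow> 'b set \<Rightarrow> ('u,'b,'a) struc \<Rightarrow> ('u,'b,'c) struc \<Rightarrow> ('a \<Rightarrow> 'c) \<Rightarrow> bool" where
  "embeds0 SU SB M N f \<longleftrightarrow>
     inj_on f (dom M) \<and> f ` dom M \<subseteq> dom N \<and>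
     (\<forall>s\<in>SU. \<forall>x\<in>dom M. un M s x \<longleftrightarrow> un N s (f x)) \<and>
     (\<forall>s\<in>SB. \<forall>x\<in>dom M. \<forall>y\<in>dom M. bin M s x y \<longleftrightarrow> bin N s (f x) (f y))"

definition embeds_ord ::
  "'u set \<Rightarrow> 'b set \<Rightarrow> ('u,'b,'a) struc \<Rightarrow> ('a \<Rightarrow> 'a \<Rightarrow> bool)
    \<Rightarrow> ('u,'b,'c) struc \<Rightarrow> ('c \<Rightarrow> 'c \<Rightarrow> bool) \<Rightarrow> ('a \<Rightarrow> 'c) \<Rightarrow> bool" where
  "embeds_ord SU SB M ltM N ltN f \<longleftrightarrow>
     embeds0 SU SB M N f \<and> (\<forall>x\<in>dom M. \<forall>y\<in>dom M. ltM x y \<longleftrightarrow> ltN (f x) (f y))"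

definition related :: "'b set \<Rightarrow> ('u,'b,'a) struc \<Rightarrow> 'a \<Rightarrow> 'a \<Rightarrow> bool" where
  "related SB M u v \<longleftrightarrow> u = v \<or> (\<exists>s\<in>SB. bin M s u v \<or> bin M s v u)"

definition irreflexive_struc :: "'b set \<Rightarrow> ('u,'b,'a) struc \<Rightarrow> bool" where
  "irreflexive_struc SB M \<longleftrightarrow> (\<forall>s\<in>SB. \<forall>x\<in>dom M. \<not> bin M s x x)"

definition forb_family :: "'b set \<Rightarrow> ('u,'b,nat) struc set \<Rightarrow> bool" where
  "forb_family SB F \<longleftrightarrow>
     (\<forall>N\<in>F. finite (dom N) \<and> (\<forall>u\<in>dom N. \<forall>v\<in>dom N. related SB N u v))"

text \<open>Membership in C0 = finite irreflexive members of Forb(F).\<close>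
definition in_C0 :: "'u set \<Rightarrow> 'b set \<Rightarrow> ('u,'b,nat) struc set \<Rightarrow> ('u,'b,'a) struc \<Rightarrow> bool" where
  "in_C0 SU SB F M \<longleftrightarrow>
     finite (dom M) \<and> irreflexive_struc SB M \<and> \<not> (\<exists>N\<in>F. \<exists>f. embeds0 SU SB N M f)"

definition strict_total_on :: "'a set \<Rightarrow> ('a \<Rightarrow> 'a \<Rightarrow> bool) \<Rightarrow> bool" where
  "strict_total_on D lt \<longleftrightarrow>
     (\<forall>x\<in>D. \<not> lt x x) \<and>
     (\<forall>x\<in>D. \<forall>y\<in>D. \<forall>z\<in>D. lt x y \<longrightarrow> lt y z \<longrightarrow> lt x z) \<and>
     (\<forall>x\<in>D. \<forall>y\<in>D. x \<noteq> y \<longrightarrow> lt x y \<or> lt y x)"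

definition in_C ::
  "'u set \<Rightarrow> 'b set \<Rightarrow> ('u,'b,nat) struc set \<Rightarrow> ('u,'b,'a) struc \<Rightarrow> ('a \<Rightarrow> 'a \<Rightarrow> bool) \<Rightarrow> bool" where
  "in_C SU SB F M lt \<longleftrightarrow> in_C0 SU SB F M \<and> strict_total_on (dom M) lt"

definition automorphism ::
  "'u set \<Rightarrow> 'b set \<Rightarrow> ('u,'b,'a) struc \<Rightarrow> ('a \<Rightarrow> 'a \<Rightarrow> bool) \<Rightarrow> ('a \<Rightarrow> 'a) \<Rightarrow> bool" where
  "automorphism SU SB A lt \<tau> \<longleftrightarrow>
     bij_betw \<tau> (dom A) (dom A) \<and> embeds_ord SU SB A lt A lt \<tau>"

definition partial_iso ::
  "'u set \<Rightarrow> 'b set \<Rightarrow> ('u,'b,'a) struc \<Rightarrow> ('a \<Rightarrow> 'a \<Rightarrow> bool) \<Rightarrow> 'a set \<Rightarrow> ('a \<Rightarrow> 'a) \<Rightarrow> bool" where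
  "partial_iso SU SB A lt S f \<longleftrightarrow>
     S \<subseteq> dom A \<and> embeds_ord SU SB (A\<lparr>dom := S\<rparr>) lt A lt f"

definition homogeneous ::
  "'u set \<Rightarrow> 'b set \<Rightarrow> ('u,'b,'a) struc \<Rightarrow> ('a \<Rightarrow> 'a \<Rightarrow> bool) \<Rightarrow> bool" where
  "homogeneous SU SB A lt \<longleftrightarrow>
     (\<forall>S f. finite S \<and> partial_iso SU SB A lt S f \<longrightarrow>
        (\<exists>\<tau>. automorphism SU SB A lt \<tau> \<and> (\<forall>x\<in>S. \<tau> x = f x)))"

text \<open>The age of (A, lt) is C: a finite ordered structure (w.l.o.g. on nat) embeds into A
  iff it belongs to C.\<close>
definition age_is_C ::
  "'u set \<Rightarrow> 'b set \<Rightarrow> ('u,'b,nat) struc set \<Rightarrow> ('u,'b,'a) struc \<Rightarrow> ('a \<Rightarrow> 'a \<Rightarrow> bool) \<Rightarrow> bool" where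
  "age_is_C SU SB F A lt \<longleftrightarrow>
     (\<forall>(M::('u,'b,nat) struc) ltM. finite (dom M) \<longrightarrow>
        ((\<exists>f. embeds_ord SU SB M ltM A lt f) \<longleftrightarrow> in_C SU SB F M ltM))"

definition fraisse_limit_C ::
  "'u set \<Rightarrow> 'b set \<Rightarrow> ('u,'b,nat) struc set \<Rightarrow> ('u,'b,'a) struc \<Rightarrow> ('a \<Rightarrow> 'a \<Rightarrow> bool) \<Rightarrow> bool" where
  "fraisse_limit_C SU SB F A lt \<longleftrightarrow>
     countable (dom A) \<and> homogeneous SU SB A lt \<and> age_is_C SU SB F A lt"

end

theory Submission
  imports Defs
begin

lemma copy_nat:
  fixes A :: "('u,'b,'a) struc"
  assumes "finite S" "S \<subseteq> dom A"
  shows "\<exists>(M::('u,'b,nat) struc) ltM d. finite (dom M) \<and> embeds_ord SU SB M ltM A lt d \<and> d ` dom M = S"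
proof -
  obtain e n where e: "e ` S = {i::nat. i < n}" "inj_on e S"
    using finite_imp_inj_to_nat_seg[OF assms(1)] by blast
  define d where "d = inv_into S e"
  have bb: "bij_betw d {i. i < n} S" unfolding d_def
    by (rule bij_betw_inv_into) (simp add: bij_betw_def e)
  hence dinj: "inj_on d {i. i < n}" and dim: "d ` {i. i < n} = S" by (auto simp: bij_betw_def)
  define M :: "('u,'b,nat) struc" where "M = \<lparr>dom = {i. i < n}, un = (\<lambda>s i. un A s (d i)),
     bin = (\<lambda>s i j. bin A s (d i) (d j))\<rparr>"
  have "embeds_ord SU SB M (\<lambda>i j. lt (d i) (d j)) A lt d"
    unfolding embeds_ord_def embeds0_def M_def using dinj dim assms(2) by simp
  moreover have "finite (dom M)" "d ` dom M = S" using dim by (simp_all add: M_def)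
  ultimately show ?thesis by blast
qed

lemma age_sub:
  fixes A :: "('u,'b,'a) struc"
  assumes age: "age_is_C SU SB F A lt" and "finite S" "S \<subseteq> dom A"
  shows "strict_total_on S lt \<and> (\<forall>s\<in>SB. \<forall>x\<in>S. \<not> bin A s x x)"
proof -
  obtain M :: "('u,'b,nat) struc" and ltM d where M: "finite (dom M)" "embeds_ord SU SB M ltM A lt d" "d ` dom M = S"
    using copy_nat[OF assms(2,3)] by blast
  have "in_C SU SB F M ltM" using age M unfolding age_is_C_def by blast
  hence st: "strict_total_on (dom M) ltM" and irr: "irreflexive_struc SB M"
    unfolding in_C_def in_C0_def by auto
  have st1: "\<And>i. i \<in> dom M \<Longrightarrow> \<not> ltM i i"
   and st2: "\<And>i j k. i \<in> dom M \<Longrightarrow> j \<in> dom M \<Longrightarrow> k \<in> dom M \<Longrightarrow> ltM i j \<Longrightarrow> ltM j k \<Longrightarrow> ltM i k"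
   and st3: "\<And>i j. i \<in> dom M \<Longrightarrow> j \<in> dom M \<Longrightarrow> i \<noteq> j \<Longrightarrow> ltM i j \<or> ltM j i"
    using st unfolding strict_total_on_def by blast+
  have dinj: "inj_on d (dom M)"
   and eb: "\<And>s i j. s \<in> SB \<Longrightarrow> i \<in> dom M \<Longrightarrow> j \<in> dom M \<Longrightarrow> bin M s i j \<longleftrightarrow> bin A s (d i) (d j)"
   and el: "\<And>i j. i \<in> dom M \<Longrightarrow> j \<in> dom M \<Longrightarrow> ltM i j \<longleftrightarrow> lt (d i) (d j)"
    using M(2) unfolding embeds_ord_def embeds0_def by auto
  have "strict_total_on S lt"
    unfolding strict_total_on_def
  proof (intro conjI ballI impI)
    fix x assume "x \<in> S" then obtain i where "i \<in> dom M" "x = d i" using M(3) by auto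
    thus "\<not> lt x x" using st1 el by auto
  next
    fix x y w assume "x \<in> S" "y \<in> S" "w \<in> S" and h: "lt x y" "lt y w"
    then obtain i j k where ijk: "i \<in> dom M" "x = d i" "j \<in> dom M" "y = d j" "k \<in> dom M" "w = d k" using M(3) by auto
    have "ltM i j" "ltM j k" using h ijk el by auto
    hence "ltM i k" using st2 ijk by blast
    thus "lt x w" using el ijk by auto
  next
    fix x y assume "x \<in> S" "y \<in> S" "x \<noteq> y"
    then obtain i j where ij: "i \<in> dom M" "x = d i" "j \<in> dom M" "y = d j" using M(3) by auto
    hence "i \<noteq> j" using \<open>x \<noteq> y\<close> by auto
    hence "ltM i j \<or> ltM j i" using st3 ij by blast
    thus "lt x y \<or> lt y x" using el ij by auto
  qed
  moreover have "\<forall>s\<in>SB. \<forall>x\<in>S. \<not> bin A s x x"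
  proof (intro ballI)
    fix s x assume "s \<in> SB" "x \<in> S"
    then obtain i where "i \<in> dom M" "x = d i" using M(3) by auto
    thus "\<not> bin A s x x" using irr eb \<open>s \<in> SB\<close> unfolding irreflexive_struc_def by auto
  qed
  ultimately show ?thesis by blast
qed

lemma no_forb:
  fixes A :: "('u,'b,'a) struc"
  assumes age: "age_is_C SU SB F A lt" and ff: "forb_family SB F" and N: "N \<in> F"
  shows "\<not> embeds0 SU SB N A f"
proof
  assume emb: "embeds0 SU SB N A f"
  have fin: "finite (dom N)" using ff N unfolding forb_family_def by auto
  have "embeds_ord SU SB N (\<lambda>x y. lt (f x) (f y)) A lt f" using emb unfolding embeds_ord_def by auto
  hence "in_C SU SB F N (\<lambda>x y. lt (f x) (f y))" using age fin unfolding age_is_C_def by blast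
  hence "\<not> embeds0 SU SB N N id" using N unfolding in_C_def in_C0_def by blast
  moreover have "embeds0 SU SB N N id" unfolding embeds0_def by auto
  ultimately show False by blast
qed

theorem mainTheorem10:
  fixes SU :: "'u set" and SB :: "'b set"
    and F :: "('u,'b,nat) struc set"
    and A :: "('u,'b,'a) struc" and lt :: "'a \<Rightarrow> 'a \<Rightarrow> bool"
    and X Y :: "'a set" and z :: 'a
  assumes "finite SU" and "finite SB"
    and "forb_family SB F"
    and "fraisse_limit_C SU SB F A lt"
    and "finite X" and "finite Y"
    and "X \<subseteq> dom A" and "Y \<subseteq> dom A" and "z \<in> dom A"
    and "X \<inter> Y = {}" and "z \<notin> X" and "z \<notin> Y"
  shows "\<exists>\<tau>. automorphism SU SB A lt \<tau> \<and>
           (\<forall>x\<in>X. \<tau> x = x) \<and>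
           (\<forall>y\<in>Y. \<not> related SB A (\<tau> z) y) \<and> \<not> related SB A (\<tau> z) z \<and>
           lt z (\<tau> z)"
proof -
  note ff = assms(3)
  have age: "age_is_C SU SB F A lt" and hom: "homogeneous SU SB A lt"
    using assms(4) unfolding fraisse_limit_C_def by auto
  define S where "S = X \<union> Y \<union> {z}"
  have finS: "finite S" and subS: "S \<subseteq> dom A" and zS: "z \<in> S"
    using assms unfolding S_def by auto
  have stS: "strict_total_on S lt" and irrS: "\<forall>s\<in>SB. \<forall>x\<in>S. \<not> bin A s x x"
    using age_sub[OF age finS subS] by auto
  have irrA: "\<And>s x. s \<in> SB \<Longrightarrow> x \<in> dom A \<Longrightarrow> \<not> bin A s x x"
    using age_sub[OF age, of "{x}" for x] by auto
  have ltirrA: "\<And>x. x \<in> dom A \<Longrightarrow> \<not> lt x x"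
    using age_sub[OF age, of "{x}" for x] unfolding strict_total_on_def by auto
  have st1: "\<And>a. a \<in> S \<Longrightarrow> \<not> lt a a"
   and st2: "\<And>a b c. a \<in> S \<Longrightarrow> b \<in> S \<Longrightarrow> c \<in> S \<Longrightarrow> lt a b \<Longrightarrow> lt b c \<Longrightarrow> lt a c"
   and st3: "\<And>a b. a \<in> S \<Longrightarrow> b \<in> S \<Longrightarrow> a \<noteq> b \<Longrightarrow> lt a b \<or> lt b a"
    using stS unfolding strict_total_on_def by blast+
  obtain e n where e: "e ` S = {i::nat. i < n}" "inj_on e S"
    using finite_imp_inj_to_nat_seg[OF finS] by blast
  define d where "d = inv_into S e"
  have bb: "bij_betw d {i. i < n} S" unfolding d_def
    by (rule bij_betw_inv_into) (simp add: bij_betw_def e)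
  hence dinj: "inj_on d {i. i < n}" and dim: "d ` {i. i < n} = S" by (auto simp: bij_betw_def)
  have de: "\<And>a. a \<in> S \<Longrightarrow> d (e a) = a" unfolding d_def using e(2) by simp
  have eS: "\<And>a. a \<in> S \<Longrightarrow> e a < n" using e(1) by auto
  have dS: "\<And>i. i < n \<Longrightarrow> d i \<in> S" using dim by auto
  define \<rho> where "\<rho> i = (if i = n then z else d i)" for i
  have \<rho>S: "\<And>i. i \<le> n \<Longrightarrow> \<rho> i \<in> S" using dS zS unfolding \<rho>_def by (auto simp: order_le_less)
  have \<rho>inj: "\<And>i j. i < n \<Longrightarrow> j < n \<Longrightarrow> \<rho> i = \<rho> j \<Longrightarrow> i = j"
    using dinj unfolding \<rho>_def inj_on_def by auto
  define M :: "('u,'b,nat) struc" where "M = \<lparr>dom = {..n}, un = (\<lambda>s i. un A s (\<rho> i)),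
     bin = (\<lambda>s i j. bin A s (\<rho> i) (\<rho> j) \<and> (i = n \<longrightarrow> j \<noteq> n \<and> \<rho> j \<in> X) \<and> (j = n \<longrightarrow> i \<noteq> n \<and> \<rho> i \<in> X))\<rparr>"
  define ltM where "ltM i j = (lt (\<rho> i) (\<rho> j) \<or> (\<rho> i = \<rho> j \<and> i \<noteq> n \<and> j = n))" for i j
  have binM: "\<And>s i j. bin M s i j \<longleftrightarrow> (bin A s (\<rho> i) (\<rho> j) \<and> (i = n \<longrightarrow> j \<noteq> n \<and> \<rho> j \<in> X) \<and> (j = n \<longrightarrow> i \<noteq> n \<and> \<rho> i \<in> X))"
    by (simp add: M_def)
  have domM: "dom M = {..n}" by (simp add: M_def)
  have MC: "in_C SU SB F M ltM"
    unfolding in_C_def in_C0_def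
  proof (intro conjI)
    show "finite (dom M)" by (simp add: M_def)
    show "irreflexive_struc SB M" unfolding irreflexive_struc_def domM binM using irrS \<rho>S by auto
    show "strict_total_on (dom M) ltM" unfolding strict_total_on_def domM
    proof (intro conjI ballI impI)
      fix i assume "i \<in> {..n}" thus "\<not> ltM i i" using st1 \<rho>S by (auto simp: ltM_def)
    next
      fix i j k assume ijk: "i \<in> {..n}" "j \<in> {..n}" "k \<in> {..n}" and h: "ltM i j" "ltM j k"
      have S3: "\<rho> i \<in> S" "\<rho> j \<in> S" "\<rho> k \<in> S" using ijk \<rho>S by auto
      show "ltM i k" using h S3 st1 st2 unfolding ltM_def by metis
    next
      fix i j assume ij: "i \<in> {..n}" "j \<in> {..n}" "i \<noteq> j"
      show "ltM i j \<or> ltM j i"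
      proof (cases "\<rho> i = \<rho> j")
        case True
        have "i = n \<or> j = n"
        proof (rule ccontr)
          assume "\<not> (i = n \<or> j = n)"
          hence "i < n" "j < n" using ij by auto
          thus False using \<rho>inj True ij(3) by blast
        qed
        thus ?thesis using True ij(3) by (auto simp: ltM_def)
      next
        case False
        thus ?thesis using st3 \<rho>S ij by (auto simp: ltM_def)
      qed
    qed
    show "\<not> (\<exists>N\<in>F. \<exists>f. embeds0 SU SB N M f)"
    proof
      assume "\<exists>N\<in>F. \<exists>f. embeds0 SU SB N M f"
      then obtain N f where N: "N \<in> F" and ef: "embeds0 SU SB N M f" by blast
      have finj: "inj_on f (dom N)" and fim: "\<And>u. u \<in> dom N \<Longrightarrow> f u \<le> n"
        and fun_: "\<And>s u. s \<in> SU \<Longrightarrow> u \<in> dom N \<Longrightarrow> un N s u \<longleftrightarrow> un A s (\<rho> (f u))"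
        and fbin: "\<And>s u v. s \<in> SB \<Longrightarrow> u \<in> dom N \<Longrightarrow> v \<in> dom N \<Longrightarrow> bin N s u v \<longleftrightarrow> bin M s (f u) (f v)"
        using ef unfolding embeds0_def domM by (auto simp: M_def)
      have relN: "\<forall>u\<in>dom N. \<forall>v\<in>dom N. related SB N u v" using ff N unfolding forb_family_def by auto
      have key: "\<rho> (f v) \<in> X" if u: "u \<in> dom N" and v: "v \<in> dom N" and fu: "f u = n" and fv: "f v \<noteq> n" for u v
      proof -
        have "u \<noteq> v" using fu fv by auto
        then obtain s where s: "s \<in> SB" "bin N s u v \<or> bin N s v u" using relN u v unfolding related_def by blast
        hence "bin M s (f u) (f v) \<or> bin M s (f v) (f u)" using fbin u v by blast
        thus "\<rho> (f v) \<in> X" using fu by (auto simp: binM)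
      qed
      have "embeds0 SU SB N A (\<rho> \<circ> f)"
        unfolding embeds0_def
      proof (intro conjI ballI)
        show "inj_on (\<rho> \<circ> f) (dom N)"
        proof (rule inj_onI)
          fix u v assume u: "u \<in> dom N" and v: "v \<in> dom N" and eq: "(\<rho> \<circ> f) u = (\<rho> \<circ> f) v"
          show "u = v"
          proof (cases "f u = n")
            case True
            show ?thesis
            proof (cases "f v = n")
              case True
              thus ?thesis using \<open>f u = n\<close> finj u v by (metis inj_on_def)
            next
              case False
              have "\<rho> (f v) \<in> X" using key[OF u v True False] .
              moreover have "\<rho> (f v) = z" using eq True by (simp add: \<rho>_def)
              ultimately show ?thesis using assms(11) by simp
            qed
          next
            case False
            show ?thesis
            proof (cases "f v = n")
              case True
              have "\<rho> (f u) \<in> X" using key[OF v u True False] .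
              moreover have "\<rho> (f u) = z" using eq True by (simp add: \<rho>_def)
              ultimately show ?thesis using assms(11) by simp
            next
              case False2: False
              have "f u < n" "f v < n" using fim u v False False2 by (auto simp: order_le_less)
              hence "f u = f v" using \<rho>inj eq by simp
              thus ?thesis using finj u v by (metis inj_on_def)
            qed
          qed
        qed
        show "(\<rho> \<circ> f) ` dom N \<subseteq> dom A" using fim \<rho>S subS by auto
      next
        fix s u assume "s \<in> SU" "u \<in> dom N"
        thus "un N s u \<longleftrightarrow> un A s ((\<rho> \<circ> f) u)" using fun_ by simp
      next
        fix s u v assume s: "s \<in> SB" and u: "u \<in> dom N" and v: "v \<in> dom N"
        have "bin N s u v \<longleftrightarrow> bin M s (f u) (f v)" using fbin s u v by blast
        also have "\<dots> \<longleftrightarrow> bin A s (\<rho> (f u)) (\<rho> (f v))"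
        proof (cases "f u = n")
          case True
          show ?thesis
          proof (cases "f v = n")
            case True
            thus ?thesis using \<open>f u = n\<close> irrS zS s by (simp add: binM \<rho>_def)
          next
            case False
            thus ?thesis using key[OF u v \<open>f u = n\<close> False] \<open>f u = n\<close> by (simp add: binM)
          qed
        next
          case False
          show ?thesis
          proof (cases "f v = n")
            case True
            thus ?thesis using key[OF v u True False] False by (simp add: binM)
          next
            case False2: False
            thus ?thesis using False by (simp add: binM)
          qed
        qed
        finally show "bin N s u v \<longleftrightarrow> bin A s ((\<rho> \<circ> f) u) ((\<rho> \<circ> f) v)" by simp
      qed
      thus False using no_forb[OF age ff N] by blast
    qed
  qed
  have finM: "finite (dom M)" by (simp add: M_def)
  obtain g where g: "embeds_ord SU SB M ltM A lt g" using age MC finM unfolding age_is_C_def by blast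
  have ginj: "inj_on g {..n}" and gA: "\<And>i. i \<le> n \<Longrightarrow> g i \<in> dom A"
    and gun: "\<And>s i. s \<in> SU \<Longrightarrow> i \<le> n \<Longrightarrow> un A s (g i) \<longleftrightarrow> un A s (\<rho> i)"
    and gbin: "\<And>s i j. s \<in> SB \<Longrightarrow> i \<le> n \<Longrightarrow> j \<le> n \<Longrightarrow> bin A s (g i) (g j) \<longleftrightarrow> bin M s i j"
    and glt: "\<And>i j. i \<le> n \<Longrightarrow> j \<le> n \<Longrightarrow> lt (g i) (g j) \<longleftrightarrow> ltM i j"
    using g unfolding embeds_ord_def embeds0_def domM by (auto simp: M_def)
  define S' where "S' = g ` {..<n}"
  define h where "h a = d (inv_into {..<n} g a)" for a
  have ginj': "inj_on g {..<n}" using ginj by (rule inj_on_subset) auto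
  have hg: "\<And>i. i < n \<Longrightarrow> h (g i) = d i" unfolding h_def using ginj' by simp
  have \<rho>d: "\<And>i. i < n \<Longrightarrow> \<rho> i = d i" unfolding \<rho>_def by simp
  have pi: "partial_iso SU SB A lt S' h"
    unfolding partial_iso_def embeds_ord_def embeds0_def
  proof (intro conjI ballI)
    show "S' \<subseteq> dom A" unfolding S'_def using gA by auto
    show "inj_on h (dom (A\<lparr>dom := S'\<rparr>))"
    proof (rule inj_onI)
      fix a b assume "a \<in> dom (A\<lparr>dom := S'\<rparr>)" "b \<in> dom (A\<lparr>dom := S'\<rparr>)" "h a = h b"
      then obtain i j where "i < n" "j < n" "a = g i" "b = g j" "d i = d j" unfolding S'_def using hg by auto
      thus "a = b" using dinj unfolding inj_on_def by auto
    qed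
    show "h ` dom (A\<lparr>dom := S'\<rparr>) \<subseteq> dom A" unfolding S'_def using hg dS subS by auto
  next
    fix s a assume s: "s \<in> SU" and "a \<in> dom (A\<lparr>dom := S'\<rparr>)"
    then obtain i where i: "i < n" "a = g i" unfolding S'_def by auto
    thus "un (A\<lparr>dom := S'\<rparr>) s a = un A s (h a)" using gun[OF s, of i] hg \<rho>d by simp
  next
    fix s a b assume s: "s \<in> SB" and "a \<in> dom (A\<lparr>dom := S'\<rparr>)" "b \<in> dom (A\<lparr>dom := S'\<rparr>)"
    then obtain i j where ij: "i < n" "a = g i" "j < n" "b = g j" unfolding S'_def by auto
    thus "bin (A\<lparr>dom := S'\<rparr>) s a b = bin A s (h a) (h b)" using gbin[OF s, of i j] hg \<rho>d by (simp add: binM)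
  next
    fix a b assume "a \<in> dom (A\<lparr>dom := S'\<rparr>)" "b \<in> dom (A\<lparr>dom := S'\<rparr>)"
    then obtain i j where ij: "i < n" "a = g i" "j < n" "b = g j" unfolding S'_def by auto
    thus "lt a b = lt (h a) (h b)" using glt[of i j] hg \<rho>d by (simp add: ltM_def)
  qed
  have "finite S'" unfolding S'_def by simp
  then obtain \<sigma> where \<sigma>: "automorphism SU SB A lt \<sigma>" "\<forall>x\<in>S'. \<sigma> x = h x"
    using hom pi unfolding homogeneous_def by blast
  have \<sigma>inj: "inj_on \<sigma> (dom A)" and \<sigma>A: "\<And>x. x \<in> dom A \<Longrightarrow> \<sigma> x \<in> dom A"
    and \<sigma>un: "\<And>s x. s \<in> SU \<Longrightarrow> x \<in> dom A \<Longrightarrow> un A s (\<sigma> x) \<longleftrightarrow> un A s x"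
    and \<sigma>bin: "\<And>s x y. s \<in> SB \<Longrightarrow> x \<in> dom A \<Longrightarrow> y \<in> dom A \<Longrightarrow> bin A s (\<sigma> x) (\<sigma> y) \<longleftrightarrow> bin A s x y"
    and \<sigma>lt: "\<And>x y. x \<in> dom A \<Longrightarrow> y \<in> dom A \<Longrightarrow> lt (\<sigma> x) (\<sigma> y) \<longleftrightarrow> lt x y"
    using \<sigma>(1) unfolding automorphism_def embeds_ord_def embeds0_def by auto
  define \<psi> where "\<psi> i = \<sigma> (g i)" for i
  have \<psi>A: "\<And>i. i \<le> n \<Longrightarrow> \<psi> i \<in> dom A" unfolding \<psi>_def using gA \<sigma>A by auto
  have \<psi>un: "\<And>s i. s \<in> SU \<Longrightarrow> i \<le> n \<Longrightarrow> un A s (\<psi> i) \<longleftrightarrow> un A s (\<rho> i)"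
    unfolding \<psi>_def using gA \<sigma>un gun by auto
  have \<psi>bin: "\<And>s i j. s \<in> SB \<Longrightarrow> i \<le> n \<Longrightarrow> j \<le> n \<Longrightarrow> bin A s (\<psi> i) (\<psi> j) \<longleftrightarrow> bin M s i j"
    unfolding \<psi>_def using gA \<sigma>bin gbin by auto
  have \<psi>lt: "\<And>i j. i \<le> n \<Longrightarrow> j \<le> n \<Longrightarrow> lt (\<psi> i) (\<psi> j) \<longleftrightarrow> ltM i j"
    unfolding \<psi>_def using gA \<sigma>lt glt by auto
  have \<psi>inj: "\<And>i j. i \<le> n \<Longrightarrow> j \<le> n \<Longrightarrow> \<psi> i = \<psi> j \<Longrightarrow> i = j"
    unfolding \<psi>_def using gA \<sigma>inj ginj unfolding inj_on_def by auto
  have \<psi>e: "\<And>a. a \<in> S \<Longrightarrow> \<psi> (e a) = a"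
    unfolding \<psi>_def using \<sigma>(2) hg de eS unfolding S'_def by auto
  have \<rho>e: "\<And>a. a \<in> S \<Longrightarrow> \<rho> (e a) = a" using de eS \<rho>d by auto
  define w where "w = \<psi> n"
  have wA: "w \<in> dom A" unfolding w_def using \<psi>A by simp
  have wS: "w \<notin> S"
  proof
    assume "w \<in> S"
    hence "\<psi> n = \<psi> (e w)" using \<psi>e w_def by simp
    hence "n = e w" using \<psi>inj eS \<open>w \<in> S\<close> by (simp add: less_imp_le)
    thus False using eS \<open>w \<in> S\<close> by fastforce
  qed
  have \<rho>n: "\<rho> n = z" unfolding \<rho>_def by simp
  have wun: "\<And>s. s \<in> SU \<Longrightarrow> un A s w \<longleftrightarrow> un A s z" unfolding w_def using \<psi>un \<rho>n by auto
  have XS: "\<And>x. x \<in> X \<Longrightarrow> x \<in> S" and YS: "\<And>y. y \<in> Y \<Longrightarrow> y \<in> S" unfolding S_def by auto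
  have eneq: "\<And>a. a \<in> S \<Longrightarrow> e a \<noteq> n" using eS by fastforce
  have wbin1: "bin A s w x \<longleftrightarrow> bin A s z x" "bin A s x w \<longleftrightarrow> bin A s x z" if "s \<in> SB" "x \<in> X" for s x
  proof -
    have x: "x \<in> S" "e x \<le> n" "e x \<noteq> n" using XS that eS eneq by (auto simp: less_imp_le)
    show "bin A s w x \<longleftrightarrow> bin A s z x"
      using \<psi>bin[OF that(1) order_refl x(2)] \<psi>e[OF x(1)] \<rho>e[OF x(1)] x(3) \<rho>n that(2)
      unfolding w_def by (simp add: binM)
    show "bin A s x w \<longleftrightarrow> bin A s x z"
      using \<psi>bin[OF that(1) x(2) order_refl] \<psi>e[OF x(1)] \<rho>e[OF x(1)] x(3) \<rho>n that(2)
      unfolding w_def by (simp add: binM)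
  qed
  have wbin2: "\<not> bin A s w y \<and> \<not> bin A s y w" if "s \<in> SB" "y \<in> S" "y \<notin> X" for s y
  proof -
    have y: "e y \<le> n" "e y \<noteq> n" using that eS eneq by (auto simp: less_imp_le)
    show ?thesis
      using \<psi>bin[OF that(1) order_refl y(1)] \<psi>bin[OF that(1) y(1) order_refl] \<psi>e[OF that(2)] \<rho>e[OF that(2)] that(3)
      unfolding w_def by (simp add: binM)
  qed
  have wlt: "lt x w \<longleftrightarrow> lt x z" "lt w x \<longleftrightarrow> lt z x" if "x \<in> X" for x
  proof -
    have x: "x \<in> S" "e x \<le> n" "e x \<noteq> n" "x \<noteq> z" using XS that eS eneq assms(11) by (auto simp: less_imp_le)
    show "lt x w \<longleftrightarrow> lt x z"
      using \<psi>lt[OF x(2) order_refl] \<psi>e[OF x(1)] \<rho>e[OF x(1)] x(3,4) \<rho>n unfolding w_def by (simp add: ltM_def)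
    show "lt w x \<longleftrightarrow> lt z x"
      using \<psi>lt[OF order_refl x(2)] \<psi>e[OF x(1)] \<rho>e[OF x(1)] x(3,4) \<rho>n unfolding w_def by (simp add: ltM_def)
  qed
  have zw: "lt z w"
    using \<psi>lt[OF less_imp_le[OF eS[OF zS]] order_refl] \<psi>e[OF zS] \<rho>e[OF zS] eneq[OF zS] \<rho>n
    unfolding w_def by (simp add: ltM_def)
  define k where "k a = (if a = z then w else a)" for a
  define T where "T = insert z X"
  have piT: "partial_iso SU SB A lt T k"
    unfolding partial_iso_def embeds_ord_def embeds0_def
  proof (intro conjI ballI)
    show "T \<subseteq> dom A" unfolding T_def using assms(7,9) by auto
    show "inj_on k (dom (A\<lparr>dom := T\<rparr>))"
      unfolding inj_on_def k_def T_def using wS XS by auto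
    show "k ` dom (A\<lparr>dom := T\<rparr>) \<subseteq> dom A" unfolding k_def T_def using wA assms(7,9) by auto
  next
    fix s a assume s: "s \<in> SU" and "a \<in> dom (A\<lparr>dom := T\<rparr>)"
    thus "un (A\<lparr>dom := T\<rparr>) s a = un A s (k a)" using wun[OF s] by (auto simp: k_def)
  next
    fix s a b assume s: "s \<in> SB" and a: "a \<in> dom (A\<lparr>dom := T\<rparr>)" and b: "b \<in> dom (A\<lparr>dom := T\<rparr>)"
    have "a = z \<or> a \<in> X" "b = z \<or> b \<in> X" using a b by (auto simp: T_def)
    thus "bin (A\<lparr>dom := T\<rparr>) s a b = bin A s (k a) (k b)"
      using wbin1[OF s] irrS zS irrA[OF s wA] s assms(11) by (auto simp: k_def)
  next
    fix a b assume a: "a \<in> dom (A\<lparr>dom := T\<rparr>)" and b: "b \<in> dom (A\<lparr>dom := T\<rparr>)"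
    have "a = z \<or> a \<in> X" "b = z \<or> b \<in> X" using a b by (auto simp: T_def)
    thus "lt a b = lt (k a) (k b)"
      using wlt st1[OF zS] ltirrA[OF wA] assms(11) by (auto simp: k_def)
  qed
  have "finite T" unfolding T_def using assms(5) by simp
  then obtain \<tau> where \<tau>: "automorphism SU SB A lt \<tau>" "\<forall>x\<in>T. \<tau> x = k x"
    using hom piT unfolding homogeneous_def by blast
  have \<tau>z: "\<tau> z = w" using \<tau>(2) unfolding T_def k_def by simp
  have \<tau>X: "\<forall>x\<in>X. \<tau> x = x" using \<tau>(2) assms(11) unfolding T_def k_def by auto
  have relY: "\<not> related SB A w y" if "y \<in> S" "y \<notin> X" for y
    using wbin2[OF _ that] wS that(1) unfolding related_def by auto
  have "\<forall>y\<in>Y. \<not> related SB A (\<tau> z) y" using relY YS assms(10) \<tau>z by blast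
  moreover have "\<not> related SB A (\<tau> z) z" using relY zS assms(11) \<tau>z by blast
  ultimately show ?thesis
    using \<tau>(1) \<tau>X \<tau>z zw by blast
qed

end
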